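(* Let $N\ge1$ and let $G$ be the graph consisting of a 5-cycle $C$ together with, for each of the $\binom{5}{3}=10$ triples $S$ of cycle vertices, a set of $N$ new vertices each adjacent exactly to the three vertices of $S$ (so $n=10N+5$). Let $F$ be uniform on $[0,1]$ and $p\in(0,1)$. Then $\mathcal{N}_{p\cdot\mathbf{1}}$ contains an equilibrium with revenue $5p(1-p^{1/3})$ and an equilibrium with revenue $(N+2)p(1-p)$. Consequently, for every fixed $p\in(0,1)$ the ratio between the best and worst equilibrium revenue at price $p$ is $\Omega(n)$.
   Context: Public-goods pricing game: $n$ buyers are the vertices of an undirected graph $G=([n],E)$; $N(i)=\{j:(i,j)\in E\}$ (so $i\notin N(i)$). Values i.i.d. uniform on $[0,1]$, $F(x)=\min\{1,x\}$ for $x\ge0$, $F(\infty)=1$. An equilibrium for price vector $\mathbf{p}$ is $\mathbf{T}\in[0,\infty]^n$ (buyer $i$ purchases iff $v_i\ge T_i$) with $T_i=p_i/\prod_{j\in N(i)}F(T_j)$ for all $i$ (convention $c/0=\infty$); $\mathcal{N}_{\mathbf{p}}$ is the set of equilibria; $\mathcal{R}(\mathbf{p},\mathbf{T})=\sum_ip_i(1-F(T_i))$; $p\cdot\mathbf{1}$ is the uniform price vector. *)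

theory Defs
  imports Complex_Main "HOL-Library.Extended_Real"
begin

definition Fu :: "ereal \<Rightarrow> real" where
  "Fu t = (if t = \<infinity> then 1 else min 1 (real_of_ereal t))"

definition nbrs :: "'v set \<Rightarrow> ('v \<Rightarrow> 'v \<Rightarrow> bool) \<Rightarrow> 'v \<Rightarrow> 'v set" where
  "nbrs V E i = {j \<in> V. E i j}"

definition is_equilibrium :: "'v set \<Rightarrow> ('v \<Rightarrow> 'v \<Rightarrow> bool) \<Rightarrow> ('v \<Rightarrow> real) \<Rightarrow> ('v \<Rightarrow> ereal) \<Rightarrow> bool" where
  "is_equilibrium V E p T \<longleftrightarrow>
     (\<forall>i\<in>V. 0 \<le> T i \<and>
        T i = (let q = (\<Prod>j\<in>nbrs V E i. Fu (T j)) in if q = 0 then \<infinity> else ereal (p i / q)))"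

definition equilibria :: "'v set \<Rightarrow> ('v \<Rightarrow> 'v \<Rightarrow> bool) \<Rightarrow> ('v \<Rightarrow> real) \<Rightarrow> ('v \<Rightarrow> ereal) set" where
  "equilibria V E p = {T. is_equilibrium V E p T \<and> (\<forall>i. i \<notin> V \<longrightarrow> T i = 0)}"

definition revenue :: "'v set \<Rightarrow> ('v \<Rightarrow> real) \<Rightarrow> ('v \<Rightarrow> ereal) \<Rightarrow> real" where
  "revenue V p T = (\<Sum>i\<in>V. p i * (1 - Fu (T i)))"

text \<open>The specific graph: cycle vertices Inl 0..Inl 4 (5-cycle), and for every 3-subset S of
  {0..4} the N vertices Inr (S, j), j < N, each adjacent exactly to the vertices of S.\<close>
type_synonym gvert = "nat + (nat set \<times> nat)"

definition gV :: "nat \<Rightarrow> gvert set" where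
  "gV N = Inl ` {..<5} \<union> Inr ` ({S. S \<subseteq> {..<5} \<and> card S = 3} \<times> {..<N})"

fun gE :: "gvert \<Rightarrow> gvert \<Rightarrow> bool" where
  "gE (Inl a) (Inl b) = (b = (a + 1) mod 5 \<or> a = (b + 1) mod 5)"
| "gE (Inl a) (Inr (S, j)) = (a \<in> S)"
| "gE (Inr (S, j)) (Inl a) = (a \<in> S)"
| "gE (Inr _) (Inr _) = False"

end

theory Submission
  imports Defs
begin

definition trip :: "nat set set" where "trip = {S. S \<subseteq> {..<5} \<and> card S = 3}"

lemma gV_alt: "gV N = Inl ` {..<5} \<union> Inr ` (trip \<times> {..<N})"
  by (simp add: gV_def trip_def)

lemma finite_trip: "finite trip"
  unfolding trip_def by (rule finite_subset[of _ "Pow {..<5}"]) auto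

lemma card_trip: "card trip = 10"
  unfolding trip_def by (simp add: n_subsets binomial_Suc_Suc numeral_eq_Suc)

lemma finite_gV: "finite (gV N)"
  by (simp add: gV_alt finite_trip)

lemma Inl_in_gV[simp]: "Inl a \<in> gV N \<longleftrightarrow> a < 5"
  by (auto simp: gV_def)

lemma Inr_in_gV[simp]: "Inr (S, j) \<in> gV N \<longleftrightarrow> S \<in> trip \<and> j < N"
  by (auto simp: gV_def trip_def)

lemma sum_gV: "sum f (gV N) = (\<Sum>b<5. f (Inl b)) + (\<Sum>x\<in>trip \<times> {..<N}. f (Inr x))"
proof -
  have "sum f (gV N) = sum f (Inl ` {..<5}) + sum f (Inr ` (trip \<times> {..<N}))"
    unfolding gV_alt by (rule sum.union_disjoint) (auto simp: finite_trip)
  also have "\<dots> = (\<Sum>b<5. f (Inl b)) + (\<Sum>x\<in>trip \<times> {..<N}. f (Inr x))"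
    by (simp add: sum.reindex)
  finally show ?thesis .
qed

lemma card_gV: "card (gV N) \<le> 5 + 10 * N"
proof -
  have "card (gV N) \<le> card (Inl ` {..<5::nat} :: gvert set) + card (Inr ` (trip \<times> {..<N}) :: gvert set)"
    unfolding gV_alt by (rule card_Un_le)
  also have "\<dots> = 5 + 10 * N" by (simp add: card_image card_cartesian_product card_trip)
  finally show ?thesis .
qed

lemma nbrs_sub: "nbrs V E v \<subseteq> V" by (auto simp: nbrs_def)

lemma Fu_ereal: "Fu (ereal x) = min 1 x" by (simp add: Fu_def)

lemma Fu_bounds: "0 \<le> t \<Longrightarrow> 0 \<le> Fu t \<and> Fu t \<le> 1"
  by (auto simp: Fu_def real_of_ereal_pos)

lemma eq_from_h:
  fixes V :: "'v set" and p :: real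
  assumes fin: "finite V" and pp: "0 < p"
    and hpos: "\<And>v. v \<in> V \<Longrightarrow> 0 < h v"
    and hfix: "\<And>v. v \<in> V \<Longrightarrow> Fu (ereal (p / (\<Prod>j\<in>nbrs V E v. h j))) = h v"
  defines "T \<equiv> (\<lambda>v. if v \<in> V then ereal (p / (\<Prod>j\<in>nbrs V E v. h j)) else 0)"
  shows "T \<in> equilibria V E (\<lambda>_. p)" "revenue V (\<lambda>_. p) T = (\<Sum>v\<in>V. p * (1 - h v))"
proof -
  have FT: "Fu (T v) = h v" if "v \<in> V" for v using hfix[OF that] that by (simp add: T_def)
  have qpos: "0 < (\<Prod>j\<in>nbrs V E v. h j)" if "v \<in> V" for v
    using hpos nbrs_sub[of V E v] by (intro prod_pos) auto
  have pq: "(\<Prod>j\<in>nbrs V E v. Fu (T j)) = (\<Prod>j\<in>nbrs V E v. h j)" for v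
    using FT nbrs_sub[of V E v] by (intro prod.cong) auto
  show "T \<in> equilibria V E (\<lambda>_. p)"
    unfolding equilibria_def is_equilibrium_def
  proof (intro CollectI conjI ballI allI impI)
    fix i assume i: "i \<in> V"
    show "0 \<le> T i" using qpos[OF i] pp i by (simp add: T_def)
    show "T i = (let q = \<Prod>j\<in>nbrs V E i. Fu (T j) in if q = 0 then \<infinity> else ereal (p / q))"
      using qpos[OF i] i unfolding pq by (simp add: T_def Let_def)
  next
    fix i assume "i \<notin> V" then show "T i = 0" by (simp add: T_def)
  qed
  show "revenue V (\<lambda>_. p) T = (\<Sum>v\<in>V. p * (1 - h v))"
    unfolding revenue_def using FT by (intro sum.cong) auto
qed

lemma prod_le_p:
  fixes h :: "'a \<Rightarrow> real"
  assumes "finite A" "\<And>x. x \<in> A \<Longrightarrow> 0 \<le> h x \<and> h x \<le> 1" "a \<in> A" "h a \<le> p"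
  shows "prod h A \<le> p"
proof -
  have "prod h A = h a * prod h (A - {a})" using assms by (simp add: prod.remove)
  moreover have "prod h (A - {a}) \<le> 1" "0 \<le> prod h (A - {a})"
    using assms by (auto intro!: prod_le_1 prod_nonneg)
  moreover have "0 \<le> h a" using assms by auto
  ultimately show ?thesis using assms(4) by (metis mult_left_le order_trans)
qed

lemma nbrs_Inr: "S \<in> trip \<Longrightarrow> nbrs (gV N) gE (Inr (S, j)) = Inl ` S"
  by (auto simp: nbrs_def trip_def elim: gE.elims)

lemma five: "(a::nat) < 5 \<Longrightarrow> a = 0 \<or> a = 1 \<or> a = 2 \<or> a = 3 \<or> a = 4" by linarith
lemma cyc_iff: "a < 5 \<Longrightarrow> b < (5::nat) \<Longrightarrow> (b = (a+1) mod 5 \<or> a = (b+1) mod 5) \<longleftrightarrow> (b = (a+1) mod 5 \<or> b = (a+4) mod 5)"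
  by (elim five[elim_format] disjE; simp)

lemma nbrs_Inl_isl: "a < 5 \<Longrightarrow> nbrs (gV N) gE (Inl a) \<inter> {x. isl x} = Inl ` {(a+1) mod 5, (a+4) mod 5}"
proof (intro set_eqI iffI)
  fix x :: gvert assume a: "a < 5" and x: "x \<in> nbrs (gV N) gE (Inl a) \<inter> {x. isl x}"
  then obtain b where b: "x = Inl b" by (cases x) auto
  with x have "b < 5" "b = (a+1) mod 5 \<or> a = (b+1) mod 5" by (auto simp: nbrs_def)
  with a cyc_iff have "b = (a+1) mod 5 \<or> b = (a+4) mod 5" by blast
  with b show "x \<in> Inl ` {(a+1) mod 5, (a+4) mod 5}" by auto
next
  fix x :: gvert assume a: "a < 5" and x: "x \<in> Inl ` {(a+1) mod 5, (a+4) mod 5}"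
  then obtain b where b: "x = Inl b" "b = (a+1) mod 5 \<or> b = (a+4) mod 5" by auto
  then have "b < 5" by auto
  with a b cyc_iff[of a b] have "b = (a+1) mod 5 \<or> a = (b+1) mod 5" by blast
  with b \<open>b < 5\<close> show "x \<in> nbrs (gV N) gE (Inl a) \<inter> {x. isl x}" by (auto simp: nbrs_def)
qed

lemma card_cyc: "(a::nat) < 5 \<Longrightarrow> card {(a+1) mod 5, (a+4) mod (5::nat)} = 2"
  by (elim five[elim_format] disjE; simp)

lemma Fu_ge: "0 < q \<Longrightarrow> q \<le> p \<Longrightarrow> Fu (ereal (p / q)) = 1"
  by (simp add: Fu_ereal)

lemma gV_cases:
  assumes "v \<in> gV N"
  obtains a where "v = Inl a" "a < 5" | S j where "v = Inr (S, j)" "S \<in> trip" "j < N"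
  using assms by (cases v) auto

lemma eq1:
  fixes p :: real
  assumes p0: "0 < p" and p1: "p < 1"
  defines "t \<equiv> p powr (1/3)"
  defines "h \<equiv> (\<lambda>v::gvert. if isl v then t else 1)"
  shows "\<exists>T\<in>equilibria (gV N) gE (\<lambda>_. p). revenue (gV N) (\<lambda>_. p) T = 5 * p * (1 - t)"
proof -
  have t0: "0 < t" using p0 by (simp add: t_def)
  have t1: "t < 1" using p0 p1 by (simp add: t_def powr01_less_one)
  have t3: "t ^ 3 = p"
  proof -
    have "t ^ 3 = t powr (real 3)" using t0 by (simp add: powr_realpow)
    also have "\<dots> = p" using p0 by (simp add: t_def powr_powr)
    finally show ?thesis .
  qed
  have fx: "Fu (ereal (p / (\<Prod>j\<in>nbrs (gV N) gE v. h j))) = h v" if v: "v \<in> gV N" for v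
    using v
  proof (cases rule: gV_cases)
    case (1 a)
    have fin: "finite (nbrs (gV N) gE v)" using finite_gV nbrs_sub by (metis finite_subset)
    have ne: "(a+1) mod 5 \<noteq> (a+4) mod 5" using 1 by (elim five[elim_format] disjE; simp)
    have c2: "card (nbrs (gV N) gE v \<inter> {x. isl x}) = 2" using 1 nbrs_Inl_isl[of a N] ne by simp
    have "(\<Prod>j\<in>nbrs (gV N) gE v. h j) = t ^ card (nbrs (gV N) gE v \<inter> {x. isl x})"
      unfolding h_def by (simp add: prod.If_cases[OF fin])
    then have q: "(\<Prod>j\<in>nbrs (gV N) gE v. h j) = t ^ 2" using c2 by simp
    have "p / t ^ 2 = t" using t0 t3[symmetric] by (simp add: power3_eq_cube power2_eq_square)
    then show ?thesis using q 1 t1 by (simp add: Fu_ereal h_def)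
  next
    case (2 S j)
    have "(\<Prod>j\<in>nbrs (gV N) gE v. h j) = (\<Prod>b\<in>S. t)"
      using 2 by (simp add: nbrs_Inr prod.reindex h_def)
    also have "\<dots> = p" using 2 t3 by (simp add: trip_def)
    finally show ?thesis using 2 p0 by (simp add: Fu_ereal h_def)
  qed
  have hp: "0 < h v" for v using t0 by (simp add: h_def)
  note E = eq_from_h[of "gV N" p h gE, OF finite_gV p0 hp fx]
  have "(\<Sum>v\<in>gV N. p * (1 - h v)) = 5 * p * (1 - t)"
    by (simp add: sum_gV h_def)
  with E show ?thesis by fastforce
qed

lemma eq2:
  fixes p :: real
  assumes p0: "0 < p" and p1: "p < 1"
  defines "h \<equiv> (\<lambda>v::gvert. case v of Inl b \<Rightarrow> (if b = 0 \<or> b = 2 then p else 1)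
                              | Inr x \<Rightarrow> (if fst x = {1,3,4} then p else 1))"
  shows "\<exists>T\<in>equilibria (gV N) gE (\<lambda>_. p). revenue (gV N) (\<lambda>_. p) T = (real N + 2) * p * (1 - p)"
proof -
  have hb: "0 \<le> h v \<and> h v \<le> 1" for v using p0 p1 by (auto simp: h_def split: sum.splits)
  have hp: "0 < h v" for v using p0 by (auto simp: h_def split: sum.splits)
  have fx: "Fu (ereal (p / (\<Prod>j\<in>nbrs (gV N) gE v. h j))) = h v" if v: "v \<in> gV N" for v
  proof -
    have fin: "finite (nbrs (gV N) gE v)" using finite_gV nbrs_sub by (metis finite_subset)
    have qpos: "0 < (\<Prod>j\<in>nbrs (gV N) gE v. h j)" using hp by (simp add: prod_pos)
    have low: "Fu (ereal (p / (\<Prod>j\<in>nbrs (gV N) gE v. h j))) = 1"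
      if "w \<in> nbrs (gV N) gE v" "h w = p" for w
      using Fu_ge[OF qpos prod_le_p[OF fin hb that(1)]] that(2) by simp
    have one: "Fu (ereal (p / (\<Prod>j\<in>nbrs (gV N) gE v. h j))) = p"
      if "\<And>w. w \<in> nbrs (gV N) gE v \<Longrightarrow> h w = 1"
      using that p1 by (simp add: Fu_ereal)
    from v show ?thesis
    proof (cases rule: gV_cases)
      case (1 a)
      show ?thesis
      proof (cases "a = 0 \<or> a = 2")
        case True
        have "h w = 1" if w: "w \<in> nbrs (gV N) gE v" for w
        proof (cases w)
          case (Inl b)
          with w 1 have "b < 5" "b = (a+1) mod 5 \<or> a = (b+1) mod 5" by (auto simp: nbrs_def)
          with True have "\<not> (b = 0 \<or> b = 2)" by (elim five[elim_format] disjE; auto)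
          then show ?thesis by (simp add: h_def Inl)
        next
          case (Inr x)
          with w 1 have "a \<in> fst x" by (cases x) (auto simp: nbrs_def)
          with True have "fst x \<noteq> {1,3,4}" by auto
          then show ?thesis by (simp add: h_def Inr)
        qed
        then show ?thesis using one True 1 by (auto simp: h_def)
      next
        case False
        define c where "c = (if a = 3 then 2 else (0::nat))"
        have c: "c = 0 \<or> c = 2" "gE (Inl a) (Inl c)"
          using 1 False unfolding c_def by (elim five[elim_format] disjE; simp)+
        then have "Inl c \<in> nbrs (gV N) gE v" using 1 by (auto simp: nbrs_def)
        moreover have "h (Inl c) = p" using c by (simp add: h_def)
        ultimately show ?thesis using low False 1 by (auto simp: h_def)
      qed
    next
      case (2 S j)
      show ?thesis
      proof (cases "S = {1,3,4}")
        case True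
        have "h w = 1" if "w \<in> nbrs (gV N) gE v" for w
          using that 2 True by (auto simp: nbrs_Inr h_def)
        then show ?thesis using one True 2 by (auto simp: h_def)
      next
        case False
        have "\<exists>c\<in>S. c = 0 \<or> c = 2"
        proof (rule ccontr)
          assume "\<not> ?thesis"
          then have "S \<subseteq> {1,3,4}" using 2 by (auto simp: trip_def dest!: five)
          moreover have "card S = card {1::nat,3,4}" using 2 by (simp add: trip_def)
          ultimately have "S = {1,3,4}" by (intro card_subset_eq) auto
          with False show False by simp
        qed
        then obtain c where c: "c \<in> S" "c = 0 \<or> c = 2" by blast
        then have "Inl c \<in> nbrs (gV N) gE v" using 2 by (simp add: nbrs_Inr)
        moreover have "h (Inl c) = p" using c by (auto simp: h_def)
        ultimately show ?thesis using low False 2 by (auto simp: h_def)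
      qed
    qed
  qed
  note E = eq_from_h[of "gV N" p h gE, OF finite_gV p0 hp fx]
  have s1: "(\<Sum>b<5. p * (1 - h (Inl b))) = 2 * p * (1 - p)"
    by (simp add: h_def numeral_eq_Suc lessThan_Suc)
  have "(\<Sum>x\<in>trip \<times> {..<N}. p * (1 - h (Inr x))) = (\<Sum>x\<in>trip \<times> {..<N}. if fst x = {1,3,4} then p * (1 - p) else 0)"
    by (intro sum.cong) (auto simp: h_def)
  also have "\<dots> = (\<Sum>x\<in>{x\<in>trip \<times> {..<N}. fst x = {1,3,4}}. p * (1 - p))"
    using finite_trip by (intro sum.inter_filter[symmetric]) auto
  also have "{x\<in>trip \<times> {..<N}. fst x = {1,3,4}} = {{1,3,4}} \<times> {..<N}"
    by (auto simp: trip_def)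
  also have "(\<Sum>x\<in>{{1::nat,3,4}} \<times> {..<N}. p * (1 - p)) = real N * p * (1 - p)"
    by (simp add: card_cartesian_product)
  finally have s2: "(\<Sum>x\<in>trip \<times> {..<N}. p * (1 - h (Inr x))) = real N * p * (1 - p)" .
  have "(\<Sum>v\<in>gV N. p * (1 - h v)) = (real N + 2) * p * (1 - p)"
    unfolding sum_gV s1 s2 by (simp add: algebra_simps)
  with E show ?thesis by fastforce
qed

lemma rev_bounds:
  assumes "T \<in> equilibria V E (\<lambda>_. p)" "0 \<le> p"
  shows "0 \<le> revenue V (\<lambda>_. p) T \<and> revenue V (\<lambda>_. p) T \<le> p * real (card V)"
proof -
  have F: "0 \<le> Fu (T v) \<and> Fu (T v) \<le> 1" if "v \<in> V" for v
    using assms that by (intro Fu_bounds) (auto simp: equilibria_def is_equilibrium_def)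
  have "0 \<le> revenue V (\<lambda>_. p) T" unfolding revenue_def
    using F assms(2) by (intro sum_nonneg) auto
  moreover have "revenue V (\<lambda>_. p) T \<le> (\<Sum>v\<in>V. p)" unfolding revenue_def
    using F assms(2) by (intro sum_mono) (auto simp: mult_left_le)
  ultimately show ?thesis by (simp add: mult.commute)
qed

theorem mainTheorem16:
  fixes p :: real
  assumes "0 < p" and "p < 1"
  shows "(\<forall>N::nat. N \<ge> 1 \<longrightarrow>
           (\<exists>T\<in>equilibria (gV N) gE (\<lambda>_. p).
               revenue (gV N) (\<lambda>_. p) T = 5 * p * (1 - p powr (1/3))) \<and>
           (\<exists>T\<in>equilibria (gV N) gE (\<lambda>_. p).
               revenue (gV N) (\<lambda>_. p) T = (real N + 2) * p * (1 - p)))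
       \<and> (\<exists>c>0. \<forall>N::nat. N \<ge> 1 \<longrightarrow>
           (SUP T\<in>equilibria (gV N) gE (\<lambda>_. p). revenue (gV N) (\<lambda>_. p) T)
             \<ge> c * real (card (gV N)) *
               (INF T\<in>equilibria (gV N) gE (\<lambda>_. p). revenue (gV N) (\<lambda>_. p) T))"
proof (intro conjI allI impI)
  fix N :: nat
  show "\<exists>T\<in>equilibria (gV N) gE (\<lambda>_. p). revenue (gV N) (\<lambda>_. p) T = 5 * p * (1 - p powr (1/3))"
    using eq1[OF assms] .
  show "\<exists>T\<in>equilibria (gV N) gE (\<lambda>_. p). revenue (gV N) (\<lambda>_. p) T = (real N + 2) * p * (1 - p)"
    using eq2[OF assms] .
next
  define A where "A = 5 * p * (1 - p powr (1/3))"
  have A0: "0 < A" using assms by (simp add: A_def powr01_less_one)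
  define c where "c = p * (1 - p) / (15 * A)"
  have c0: "0 < c" using A0 assms by (simp add: c_def)
  show "\<exists>c>0. \<forall>N::nat. N \<ge> 1 \<longrightarrow>
           (SUP T\<in>equilibria (gV N) gE (\<lambda>_. p). revenue (gV N) (\<lambda>_. p) T)
             \<ge> c * real (card (gV N)) *
               (INF T\<in>equilibria (gV N) gE (\<lambda>_. p). revenue (gV N) (\<lambda>_. p) T)"
  proof (intro exI[of _ c] conjI allI impI c0)
    fix N :: nat assume N: "N \<ge> 1"
    let ?Q = "equilibria (gV N) gE (\<lambda>_. p)"
    let ?R = "revenue (gV N) (\<lambda>_. p)"
    have bd: "0 \<le> ?R T \<and> ?R T \<le> p * real (card (gV N))" if "T \<in> ?Q" for T
      using rev_bounds[OF that] assms by simp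
    have ba: "bdd_above (?R ` ?Q)" using bd by (intro bdd_aboveI[of _ "p * real (card (gV N))"]) auto
    have bb: "bdd_below (?R ` ?Q)" using bd by (intro bdd_belowI[of _ 0]) auto
    obtain T1 where T1: "T1 \<in> ?Q" "?R T1 = A" using eq1[OF assms, of N] A_def by auto
    obtain T2 where T2: "T2 \<in> ?Q" "?R T2 = (real N + 2) * p * (1 - p)" using eq2[OF assms, of N] by auto
    have inf: "(INF T\<in>?Q. ?R T) \<le> A" using cINF_lower[OF bb T1(1)] T1(2) by simp
    have sup: "(real N + 2) * p * (1 - p) \<le> (SUP T\<in>?Q. ?R T)" using cSUP_upper[OF T2(1) ba] T2(2) by simp
    have cardle: "real (card (gV N)) \<le> 15 * real N" using card_gV[of N] N by linarith
    have "c * real (card (gV N)) * (INF T\<in>?Q. ?R T) \<le> c * real (card (gV N)) * A"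
      using inf c0 by (intro mult_left_mono) auto
    also have "\<dots> \<le> c * (15 * real N) * A"
      using cardle c0 A0 by (intro mult_right_mono mult_left_mono) auto
    also have "\<dots> = real N * p * (1 - p)" using A0 by (simp add: c_def field_simps)
    also have "\<dots> \<le> (real N + 2) * p * (1 - p)" using assms by (intro mult_right_mono) auto
    finally show "c * real (card (gV N)) * (INF T\<in>?Q. ?R T) \<le> (SUP T\<in>?Q. ?R T)" using sup by linarith
  qed
qed

end
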